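(* Let $G$ be a weak directed $st$-graph. Then in every complete chain of minimal vertex separators $T_0,T_1,\ldots,T_n$ of $G$ there exists some $T_i$ that contains a critical node.
   Context: A directed $st$-graph $G=(V,E,s,t)$ is a finite directed graph with no self-loops and no parallel edges, with distinct source $s$ (no incoming edges) and sink $t$ (no outgoing edges), such that every vertex lies on some directed walk from $s$ to $t$. Channels: a charge function $\eta:V\to\mathbb{N}\cup\{\infty\}$ with $\eta(s)=\eta(t)=\infty$; a flow for $\eta$ is a finitely supported $\phi$ from the set of $s$–$t$ walks to $\mathbb{N}$ with $\sum_p m_v(p)\phi(p)\le\eta(v)$ for every $v$ ($m_v(p)$ = number of occurrences of $v$ in $p$); value $\sum_p\phi(p)$; $\max_\eta$ = maximum value; $\phi$ inhibits $\eta$ if after subtracting $\phi$'s consumption from $\eta$ no positive-value flow exists; $\min_\eta$ = minimum value of an inhibiting flow; $G$ is weak if $\min_\eta\ne\max_\eta$ for some $\eta$. A vertex separator is a set $T\subseteq V$ meeting every $s$–$t$ walk; an mvs is an inclusion-minimal one. For $u\in V$, $A\subseteq V$: $u\sqsubseteq A$ if every directed walk from $u$ to $t$ contains a vertex of $A$; for $A,A'\subseteq V$, $A\sqsubseteq A'$ if $u\sqsubseteq A'$ for all $u\in A$, and $A\sqsubset A'$ means $A\sqsubseteq A'$ and $A\ne A'$. A sequence of mvs's $T_0,\ldots,T_n$ is a complete chain if $T_0=\{s\}$, $T_n=\{t\}$, $T_i\sqsubset T_{i+1}$ for all $i$, and for every mvs $T$ and every $i$, $T_i\sqsubseteq T\sqsubseteq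 T_{i+1}$ implies $T=T_i$ or $T=T_{i+1}$. A vertex $b$ is a critical node if there exist an mvs $T$ and $a\in T$ with $b\in T$ and a directed walk of length at least one from $a$ to $b$ ($a=b$ allowed). *)

theory Defs
  imports Main "HOL-Library.Extended_Nat"
begin

text \<open>A walk is a nonempty list of vertices whose consecutive entries are edges.
  Its length is the number of edges, i.e. length p - 1.\<close>

definition walk :: "('v \<times> 'v) set \<Rightarrow> 'v list \<Rightarrow> bool" where
  "walk E p \<longleftrightarrow> p \<noteq> [] \<and> (\<forall>i. Suc i < length p \<longrightarrow> (p ! i, p ! Suc i) \<in> E)"

definition walk_from_to :: "('v \<times> 'v) set \<Rightarrow> 'v \<Rightarrow> 'v \<Rightarrow> 'v list \<Rightarrow> bool" where
  "walk_from_to E a b p \<longleftrightarrow> walk E p \<and> hd p = a \<and> last p = b"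

definition st_graph :: "'v set \<Rightarrow> ('v \<times> 'v) set \<Rightarrow> 'v \<Rightarrow> 'v \<Rightarrow> bool" where
  "st_graph V E s t \<longleftrightarrow>
     finite V \<and> E \<subseteq> V \<times> V \<and> (\<forall>v. (v, v) \<notin> E) \<and>
     s \<in> V \<and> t \<in> V \<and> s \<noteq> t \<and>
     (\<forall>u. (u, s) \<notin> E) \<and> (\<forall>w. (t, w) \<notin> E) \<and>
     (\<forall>v\<in>V. \<exists>p. walk_from_to E s t p \<and> v \<in> set p)"

definition flow_support :: "('v list \<Rightarrow> nat) \<Rightarrow> 'v list set" where
  "flow_support \<phi> = {p. \<phi> p \<noteq> 0}"

definition consumption :: "('v list \<Rightarrow> nat) \<Rightarrow> 'v \<Rightarrow> nat" where
  "consumption \<phi> v = (\<Sum>p\<in>flow_support \<phi>. count_list p v * \<phi> p)"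

definition flow_value :: "('v list \<Rightarrow> nat) \<Rightarrow> nat" where
  "flow_value \<phi> = (\<Sum>p\<in>flow_support \<phi>. \<phi> p)"

definition is_flow :: "('v \<times> 'v) set \<Rightarrow> 'v \<Rightarrow> 'v \<Rightarrow> ('v \<Rightarrow> enat) \<Rightarrow> ('v list \<Rightarrow> nat) \<Rightarrow> bool" where
  "is_flow E s t \<eta> \<phi> \<longleftrightarrow>
     finite (flow_support \<phi>) \<and>
     (\<forall>p\<in>flow_support \<phi>. walk_from_to E s t p) \<and>
     (\<forall>v. enat (consumption \<phi> v) \<le> \<eta> v)"

definition residual :: "('v \<Rightarrow> enat) \<Rightarrow> ('v list \<Rightarrow> nat) \<Rightarrow> 'v \<Rightarrow> enat" where
  "residual \<eta> \<phi> v = \<eta> v - enat (consumption \<phi> v)"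

definition inhibits :: "('v \<times> 'v) set \<Rightarrow> 'v \<Rightarrow> 'v \<Rightarrow> ('v list \<Rightarrow> nat) \<Rightarrow> ('v \<Rightarrow> enat) \<Rightarrow> bool" where
  "inhibits E s t \<phi> \<eta> \<longleftrightarrow> is_flow E s t \<eta> \<phi> \<and>
     \<not> (\<exists>\<psi>. is_flow E s t (residual \<eta> \<phi>) \<psi> \<and> flow_value \<psi> > 0)"

text \<open>max and min as extended naturals (Sup/Inf; Inf of the empty set is \<infinity>).\<close>
definition max_flow :: "('v \<times> 'v) set \<Rightarrow> 'v \<Rightarrow> 'v \<Rightarrow> ('v \<Rightarrow> enat) \<Rightarrow> enat" where
  "max_flow E s t \<eta> = Sup {enat (flow_value \<phi>) | \<phi>. is_flow E s t \<eta> \<phi>}"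

definition min_inhibit :: "('v \<times> 'v) set \<Rightarrow> 'v \<Rightarrow> 'v \<Rightarrow> ('v \<Rightarrow> enat) \<Rightarrow> enat" where
  "min_inhibit E s t \<eta> = Inf {enat (flow_value \<phi>) | \<phi>. inhibits E s t \<phi> \<eta>}"

definition charge :: "'v \<Rightarrow> 'v \<Rightarrow> ('v \<Rightarrow> enat) \<Rightarrow> bool" where
  "charge s t \<eta> \<longleftrightarrow> \<eta> s = \<infinity> \<and> \<eta> t = \<infinity>"

definition weak :: "'v set \<Rightarrow> ('v \<times> 'v) set \<Rightarrow> 'v \<Rightarrow> 'v \<Rightarrow> bool" where
  "weak V E s t \<longleftrightarrow> (\<exists>\<eta>. charge s t \<eta> \<and> min_inhibit E s t \<eta> \<noteq> max_flow E s t \<eta>)"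

definition vertex_separator :: "'v set \<Rightarrow> ('v \<times> 'v) set \<Rightarrow> 'v \<Rightarrow> 'v \<Rightarrow> 'v set \<Rightarrow> bool" where
  "vertex_separator V E s t T \<longleftrightarrow> T \<subseteq> V \<and>
     (\<forall>p. walk_from_to E s t p \<longrightarrow> set p \<inter> T \<noteq> {})"

definition mvs :: "'v set \<Rightarrow> ('v \<times> 'v) set \<Rightarrow> 'v \<Rightarrow> 'v \<Rightarrow> 'v set \<Rightarrow> bool" where
  "mvs V E s t T \<longleftrightarrow> vertex_separator V E s t T \<and>
     (\<forall>T'. T' \<subset> T \<longrightarrow> \<not> vertex_separator V E s t T')"

text \<open>u \<sqsubseteq> A: every walk from u to t contains a vertex of A.\<close>
definition below :: "('v \<times> 'v) set \<Rightarrow> 'v \<Rightarrow> 'v \<Rightarrow> 'v set \<Rightarrow> bool" where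
  "below E t u A \<longleftrightarrow> (\<forall>p. walk_from_to E u t p \<longrightarrow> set p \<inter> A \<noteq> {})"

definition set_below :: "('v \<times> 'v) set \<Rightarrow> 'v \<Rightarrow> 'v set \<Rightarrow> 'v set \<Rightarrow> bool" where
  "set_below E t A A' \<longleftrightarrow> (\<forall>u\<in>A. below E t u A')"

definition set_strict_below :: "('v \<times> 'v) set \<Rightarrow> 'v \<Rightarrow> 'v set \<Rightarrow> 'v set \<Rightarrow> bool" where
  "set_strict_below E t A A' \<longleftrightarrow> set_below E t A A' \<and> A \<noteq> A'"

definition complete_chain ::
  "'v set \<Rightarrow> ('v \<times> 'v) set \<Rightarrow> 'v \<Rightarrow> 'v \<Rightarrow> (nat \<Rightarrow> 'v set) \<Rightarrow> nat \<Rightarrow> bool" where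
  "complete_chain V E s t T n \<longleftrightarrow>
     (\<forall>i\<le>n. mvs V E s t (T i)) \<and> T 0 = {s} \<and> T n = {t} \<and>
     (\<forall>i<n. set_strict_below E t (T i) (T (Suc i))) \<and>
     (\<forall>T'. \<forall>i<n. mvs V E s t T' \<and> set_below E t (T i) T' \<and> set_below E t T' (T (Suc i))
        \<longrightarrow> T' = T i \<or> T' = T (Suc i))"

definition critical_node :: "'v set \<Rightarrow> ('v \<times> 'v) set \<Rightarrow> 'v \<Rightarrow> 'v \<Rightarrow> 'v \<Rightarrow> bool" where
  "critical_node V E s t b \<longleftrightarrow>
     (\<exists>T a. mvs V E s t T \<and> a \<in> T \<and> b \<in> T \<and>
        (\<exists>p. walk_from_to E a b p \<and> length p \<ge> 2))"

end

theory Submission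
  imports Defs
begin

lemma succ_nth: "successively P p \<longleftrightarrow> (\<forall>i. Suc i < length p \<longrightarrow> P (p ! i) (p ! Suc i))"
proof (induction p rule: induct_list012)
  case (3 x y xs)
  show ?case
  proof
    assume "successively P (x # y # xs)"
    then show "\<forall>i. Suc i < length (x # y # xs) \<longrightarrow> P ((x # y # xs) ! i) ((x # y # xs) ! Suc i)"
      using 3 by (auto simp: nth_Cons split: nat.splits)
  next
    assume H: "\<forall>i. Suc i < length (x # y # xs) \<longrightarrow> P ((x # y # xs) ! i) ((x # y # xs) ! Suc i)"
    have "P x y" using H[rule_format, of 0] by simp
    moreover have "\<forall>i. Suc i < length (y # xs) \<longrightarrow> P ((y # xs) ! i) ((y # xs) ! Suc i)"
      using H by (metis Suc_less_eq length_Cons nth_Cons_Suc)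
    ultimately show "successively P (x # y # xs)" using 3 by simp
  qed
qed auto

lemma walk_succ: "walk E p \<longleftrightarrow> p \<noteq> [] \<and> successively (\<lambda>x y. (x,y) \<in> E) p"
  unfolding walk_def succ_nth by blast

lemma walk_append_iff:
  "xs \<noteq> [] \<Longrightarrow> ys \<noteq> [] \<Longrightarrow> walk E (xs @ ys) \<longleftrightarrow> walk E xs \<and> walk E ys \<and> (last xs, hd ys) \<in> E"
  by (auto simp: walk_succ successively_append_iff)

lemma walk_split:
  assumes "walk E (xs @ x # ys)"
  shows "walk E (xs @ [x])" "walk E (x # ys)"
  using assms by (auto simp: walk_succ successively_append_iff)

lemma walk_glue:
  assumes "walk E (xs @ [x])" "walk E (x # ys)"
  shows "walk E (xs @ x # ys)"
  using assms by (auto simp: walk_succ successively_append_iff successively_Cons)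

lemma wft_split:
  assumes "walk_from_to E a b (xs @ x # ys)"
  shows "walk_from_to E a x (xs @ [x])" "walk_from_to E x b (x # ys)"
  using assms walk_split[of E xs x ys] unfolding walk_from_to_def
  by (auto simp: hd_append last_append split: if_splits)

lemma wft_glue:
  assumes "walk_from_to E a x (xs @ [x])" "walk_from_to E x b (x # ys)"
  shows "walk_from_to E a b (xs @ x # ys)"
  using assms walk_glue[of E xs x ys] unfolding walk_from_to_def
  by (auto simp: hd_append last_append split: if_splits)

lemma wft_glue2:
  assumes "walk_from_to E a x p" "walk_from_to E x b q"
  shows "walk_from_to E a b (butlast p @ q)"
proof -
  have p: "p = butlast p @ [x]" using assms(1) unfolding walk_from_to_def walk_def
    by (metis append_butlast_last_id)
  have q: "q = x # tl q" using assms(2) unfolding walk_from_to_def walk_def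
    by (metis list.collapse)
  have "walk_from_to E a b (butlast p @ x # tl q)"
    using wft_glue[where xs="butlast p" and ys="tl q"] assms p q by metis
  then show ?thesis using q by metis
qed

lemma wft_nonempty: "walk_from_to E a b p \<Longrightarrow> p \<noteq> []"
  by (simp add: walk_from_to_def walk_def)

lemma wft_sub:
  assumes "walk_from_to E a b (xs @ x # ys @ y # zs)"
  shows "walk_from_to E x y (x # ys @ [y])"
proof -
  have "walk_from_to E x b (x # ys @ y # zs)" using wft_split(2)[OF assms] .
  then have "walk_from_to E x y ((x # ys) @ [y])"
    using wft_split(1)[of E x b "x # ys" y zs] by simp
  then show ?thesis by simp
qed

lemma walk_distinct:
  assumes "walk_from_to E a b p"
  shows "\<exists>p'. walk_from_to E a b p' \<and> distinct p' \<and> set p' \<subseteq> set p"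
  using assms
proof (induction "length p" arbitrary: p rule: less_induct)
  case less
  show ?case
  proof (cases "distinct p")
    case True then show ?thesis using less.prems by blast
  next
    case False
    then obtain xs ys zs y where p: "p = xs @ [y] @ ys @ [y] @ zs"
      using not_distinct_decomp by blast
    have w1: "walk_from_to E a y (xs @ [y])" using wft_split(1)[of E a b xs y "ys @ [y] @ zs"] less.prems p by simp
    have w2: "walk_from_to E y b (y # zs)" using wft_split(2)[of E a b "xs @ [y] @ ys" y zs] less.prems p by simp
    have "walk_from_to E a b (xs @ y # zs)" using wft_glue[OF w1 w2] .
    moreover have "length (xs @ y # zs) < length p" using p by simp
    ultimately obtain p' where "walk_from_to E a b p'" "distinct p'" "set p' \<subseteq> set (xs @ y # zs)"
      using less.hyps by blast
    then show ?thesis using p by auto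
  qed
qed

lemma walk_in_V:
  assumes "st_graph V E s t" "walk_from_to E s t p"
  shows "set p \<subseteq> V"
proof
  fix v assume v: "v \<in> set p"
  then obtain xs ys where p: "p = xs @ v # ys" by (meson split_list)
  have E: "E \<subseteq> V \<times> V" "s \<noteq> t" using assms(1) by (auto simp: st_graph_def)
  show "v \<in> V"
  proof (cases ys)
    case Nil
    then have "xs \<noteq> []" using assms(2) p E(2) by (auto simp: walk_from_to_def)
    then have "xs = butlast xs @ [last xs]" by simp
    then have "walk E (butlast xs @ [last xs] @ [v])" using assms(2) p Nil
      by (metis append_assoc walk_from_to_def)
    then have "(last xs, v) \<in> E" by (auto simp: walk_succ successively_append_iff)
    then show ?thesis using E by auto
  next
    case (Cons y ys')
    then have "walk E (v # y # ys')" using walk_split(2)[of E xs v ys] assms(2) p by (simp add: walk_from_to_def)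
    then have "(v, y) \<in> E" by (simp add: walk_succ)
    then show ?thesis using E by auto
  qed
qed

lemma mvs_sep: "mvs V E s t A \<Longrightarrow> vertex_separator V E s t A"
  by (simp add: mvs_def)

lemma sep_hits: "vertex_separator V E s t A \<Longrightarrow> walk_from_to E s t p \<Longrightarrow> \<exists>x\<in>set p. x \<in> A"
  unfolding vertex_separator_def by blast

lemma mvs_private:
  assumes "mvs V E s t A" "v \<in> A"
  shows "\<exists>q. walk_from_to E s t q \<and> (\<forall>x\<in>set q. x \<in> A \<longrightarrow> x = v) \<and> v \<in> set q"
proof -
  have "A - {v} \<subset> A" using assms(2) by blast
  then have "\<not> vertex_separator V E s t (A - {v})" using assms(1) by (simp add: mvs_def)
  moreover have "A - {v} \<subseteq> V" using assms(1) by (auto simp: mvs_def vertex_separator_def)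
  ultimately obtain q where q: "walk_from_to E s t q" "set q \<inter> (A - {v}) = {}"
    unfolding vertex_separator_def by blast
  then have "\<exists>x\<in>set q. x \<in> A" using assms(1) sep_hits mvs_sep by metis
  then show ?thesis using q by blast
qed

definition Fm :: "('v \<times> 'v) set \<Rightarrow> 'v \<Rightarrow> 'v set \<Rightarrow> 'v set \<Rightarrow> 'v set" where
  "Fm E s A B = {v \<in> A \<union> B. \<exists>p. walk_from_to E s v p \<and> (\<forall>x\<in>set (butlast p). x \<notin> A \<union> B)}"

definition Lm :: "('v \<times> 'v) set \<Rightarrow> 'v \<Rightarrow> 'v set \<Rightarrow> 'v set \<Rightarrow> 'v set" where
  "Lm E t A B = {v \<in> A \<union> B. \<exists>w. walk_from_to E v t w \<and> (\<forall>x\<in>set (tl w). x \<notin> A \<union> B)}"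

lemma Fm_comm: "Fm E s A B = Fm E s B A"
  unfolding Fm_def by (simp add: Un_commute)

lemma Lm_comm: "Lm E t A B = Lm E t B A"
  unfolding Lm_def by (simp add: Un_commute)

lemma Fm_sep:
  assumes "vertex_separator V E s t A" "vertex_separator V E s t B"
  shows "vertex_separator V E s t (Fm E s A B)"
  unfolding vertex_separator_def
proof (intro conjI allI impI)
  show "Fm E s A B \<subseteq> V" using assms unfolding Fm_def vertex_separator_def by auto
next
  fix p assume p: "walk_from_to E s t p"
  then have "\<exists>x\<in>set p. x \<in> A \<union> B" using sep_hits[OF assms(1)] by blast
  then obtain xs x ys where d: "p = xs @ x # ys" "x \<in> A \<union> B" "\<forall>y\<in>set xs. y \<notin> A \<union> B"
    using split_list_first_prop[of p "\<lambda>x. x \<in> A \<union> B"] by blast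
  have "walk_from_to E s x (xs @ [x])" using wft_split(1) p d(1) by metis
  then have "x \<in> Fm E s A B" using d unfolding Fm_def by fastforce
  then show "set p \<inter> Fm E s A B \<noteq> {}" using d(1) by auto
qed

lemma Lm_sep:
  assumes "vertex_separator V E s t A" "vertex_separator V E s t B"
  shows "vertex_separator V E s t (Lm E t A B)"
  unfolding vertex_separator_def
proof (intro conjI allI impI)
  show "Lm E t A B \<subseteq> V" using assms unfolding Lm_def vertex_separator_def by auto
next
  fix p assume p: "walk_from_to E s t p"
  then have "\<exists>x\<in>set p. x \<in> A \<union> B" using sep_hits[OF assms(1)] by blast
  then obtain xs x ys where d: "p = xs @ x # ys" "x \<in> A \<union> B" "\<forall>y\<in>set ys. y \<notin> A \<union> B"
    using split_list_last_prop[of p "\<lambda>x. x \<in> A \<union> B"] by blast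
  have "walk_from_to E x t (x # ys)" using wft_split(2) p d(1) by metis
  then have "x \<in> Lm E t A B" using d unfolding Lm_def by fastforce
  then show "set p \<inter> Lm E t A B \<noteq> {}" using d(1) by auto
qed

lemma Fm_min_aux:
  assumes A: "mvs V E s t A" and vF: "v \<in> Fm E s A B" and vA: "v \<in> A"
  shows "\<exists>r. walk_from_to E s t r \<and> set r \<inter> (Fm E s A B - {v}) = {}"
proof -
  obtain p0 where p0: "walk_from_to E s v p0" "\<forall>x\<in>set (butlast p0). x \<notin> A \<union> B"
    using vF unfolding Fm_def by blast
  obtain q where q: "walk_from_to E s t q" "\<forall>x\<in>set q. x \<in> A \<longrightarrow> x = v" "v \<in> set q"
    using mvs_private[OF A vA] by blast
  obtain q1 q2 where qd: "q = q1 @ v # q2" "v \<notin> set q2" using split_list_last[OF q(3)] by blast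
  have w2: "walk_from_to E v t (v # q2)" using wft_split(2) q(1) qd(1) by metis
  have r: "walk_from_to E s t (butlast p0 @ v # q2)" using wft_glue2[OF p0(1) w2] .
  have "set (butlast p0 @ v # q2) \<inter> (Fm E s A B - {v}) = {}"
  proof (rule ccontr)
    assume "set (butlast p0 @ v # q2) \<inter> (Fm E s A B - {v}) \<noteq> {}"
    then obtain u where u: "u \<in> set (butlast p0 @ v # q2)" "u \<in> Fm E s A B" "u \<noteq> v" by blast
    have uAB: "u \<in> A \<union> B" using u(2) unfolding Fm_def by blast
    then have "u \<in> set q2" using u(1,3) p0(2) by auto
    then have uA: "u \<notin> A" using q(2) qd u(3) by auto
    obtain p1 where p1: "walk_from_to E s u p1" "\<forall>x\<in>set (butlast p1). x \<notin> A \<union> B"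
      using u(2) unfolding Fm_def by blast
    obtain qa qb where q2d: "q2 = qa @ u # qb" using split_list[OF \<open>u \<in> set q2\<close>] by blast
    have "walk_from_to E u t (u # qb)" using wft_split(2)[of E s t "q1 @ v # qa" u qb] q(1) qd q2d by simp
    then have r': "walk_from_to E s t (butlast p1 @ u # qb)" using wft_glue2[OF p1(1)] by metis
    have "set (butlast p1 @ u # qb) \<inter> A = {}"
      using p1(2) uA q(2) qd q2d qd(2) by auto
    then show False using sep_hits[OF mvs_sep[OF A] r'] by blast
  qed
  then show ?thesis using r by blast
qed

lemma Fm_mvs:
  assumes A: "mvs V E s t A" and B: "mvs V E s t B"
  shows "mvs V E s t (Fm E s A B)"
  unfolding mvs_def
proof (intro conjI allI impI)
  show "vertex_separator V E s t (Fm E s A B)" using Fm_sep mvs_sep A B by metis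
next
  fix T' assume T': "T' \<subset> Fm E s A B"
  then obtain v where v: "v \<in> Fm E s A B" "v \<notin> T'" by blast
  have "v \<in> A \<union> B" using v(1) unfolding Fm_def by blast
  then obtain r where r: "walk_from_to E s t r" "set r \<inter> (Fm E s A B - {v}) = {}"
  proof
    assume "v \<in> A" then show ?thesis using Fm_min_aux[OF A v(1)] that by blast
  next
    assume "v \<in> B" then show ?thesis using Fm_min_aux[OF B, of v A] v(1) Fm_comm that by metis
  qed
  then have "set r \<inter> T' = {}" using T' v by blast
  then show "\<not> vertex_separator V E s t T'" using r(1) unfolding vertex_separator_def by blast
qed

lemma Lm_min_aux:
  assumes A: "mvs V E s t A" and vL: "v \<in> Lm E t A B" and vA: "v \<in> A"
  shows "\<exists>r. walk_from_to E s t r \<and> set r \<inter> (Lm E t A B - {v}) = {}"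
proof -
  obtain w where w: "walk_from_to E v t w" "\<forall>x\<in>set (tl w). x \<notin> A \<union> B"
    using vL unfolding Lm_def by blast
  have wv: "w = v # tl w" using w(1) unfolding walk_from_to_def walk_def by (metis list.collapse)
  obtain q where q: "walk_from_to E s t q" "\<forall>x\<in>set q. x \<in> A \<longrightarrow> x = v" "v \<in> set q"
    using mvs_private[OF A vA] by blast
  obtain q1 q2 where qd: "q = q1 @ v # q2" "v \<notin> set q1" using split_list_first[OF q(3)] by blast
  have w1: "walk_from_to E s v (q1 @ [v])" using wft_split(1) q(1) qd(1) by metis
  have r: "walk_from_to E s t (q1 @ v # tl w)" using wft_glue[OF w1] w(1) wv by metis
  have "set (q1 @ v # tl w) \<inter> (Lm E t A B - {v}) = {}"
  proof (rule ccontr)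
    assume "set (q1 @ v # tl w) \<inter> (Lm E t A B - {v}) \<noteq> {}"
    then obtain u where u: "u \<in> set (q1 @ v # tl w)" "u \<in> Lm E t A B" "u \<noteq> v" by blast
    have uAB: "u \<in> A \<union> B" using u(2) unfolding Lm_def by blast
    then have "u \<in> set q1" using u(1,3) w(2) by auto
    then have uA: "u \<notin> A" using q(2) qd u(3) by auto
    obtain w1 where w1: "walk_from_to E u t w1" "\<forall>x\<in>set (tl w1). x \<notin> A \<union> B"
      using u(2) unfolding Lm_def by blast
    have w1u: "w1 = u # tl w1" using w1(1) unfolding walk_from_to_def walk_def by (metis list.collapse)
    obtain qa qb where q1d: "q1 = qa @ u # qb" using split_list[OF \<open>u \<in> set q1\<close>] by blast
    have "walk_from_to E s u (qa @ [u])" using wft_split(1)[of E s t qa u "qb @ v # q2"] q(1) qd q1d by simp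
    then have r': "walk_from_to E s t (qa @ u # tl w1)" using wft_glue w1(1) w1u by metis
    have "set (qa @ u # tl w1) \<inter> A = {}"
      using w1(2) uA q(2) qd q1d by auto
    then show False using sep_hits[OF mvs_sep[OF A] r'] by blast
  qed
  then show ?thesis using r by blast
qed

lemma Lm_mvs:
  assumes A: "mvs V E s t A" and B: "mvs V E s t B"
  shows "mvs V E s t (Lm E t A B)"
  unfolding mvs_def
proof (intro conjI allI impI)
  show "vertex_separator V E s t (Lm E t A B)" using Lm_sep mvs_sep A B by metis
next
  fix T' assume T': "T' \<subset> Lm E t A B"
  then obtain v where v: "v \<in> Lm E t A B" "v \<notin> T'" by blast
  have "v \<in> A \<union> B" using v(1) unfolding Lm_def by blast
  then obtain r where r: "walk_from_to E s t r" "set r \<inter> (Lm E t A B - {v}) = {}"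
  proof
    assume "v \<in> A" then show ?thesis using Lm_min_aux[OF A v(1)] that by blast
  next
    assume "v \<in> B" then show ?thesis using Lm_min_aux[OF B, of v A] v(1) Lm_comm that by metis
  qed
  then have "set r \<inter> T' = {}" using T' v by blast
  then show "\<not> vertex_separator V E s t T'" using r(1) unfolding vertex_separator_def by blast
qed

lemma Fm_below:
  assumes B: "vertex_separator V E s t B"
  shows "set_below E t (Fm E s A B) B"
  unfolding set_below_def below_def
proof (intro ballI allI impI)
  fix v w assume v: "v \<in> Fm E s A B" and w: "walk_from_to E v t w"
  obtain p0 where p0: "walk_from_to E s v p0" "\<forall>x\<in>set (butlast p0). x \<notin> A \<union> B"
    using v unfolding Fm_def by blast
  have "walk_from_to E s t (butlast p0 @ w)" using wft_glue2[OF p0(1) w] .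
  then obtain x where "x \<in> set (butlast p0 @ w)" "x \<in> B" using sep_hits[OF B] by blast
  then show "set w \<inter> B \<noteq> {}" using p0(2) by auto
qed

lemma Lm_above:
  shows "set_below E t A (Lm E t A B)"
  unfolding set_below_def below_def
proof (intro ballI allI impI)
  fix u w assume u: "u \<in> A" and w: "walk_from_to E u t w"
  have "hd w = u" "w \<noteq> []" using w unfolding walk_from_to_def walk_def by auto
  then have "\<exists>x\<in>set w. x \<in> A \<union> B" using u by (metis Un_iff list.set_sel(1))
  then obtain xs x ys where d: "w = xs @ x # ys" "x \<in> A \<union> B" "\<forall>y\<in>set ys. y \<notin> A \<union> B"
    using split_list_last_prop[of w "\<lambda>x. x \<in> A \<union> B"] by blast
  have "walk_from_to E x t (x # ys)" using wft_split(2) w d(1) by metis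
  then have "x \<in> Lm E t A B" using d unfolding Lm_def by fastforce
  then show "set w \<inter> Lm E t A B \<noteq> {}" using d(1) by auto
qed

lemma crit_of_walk:
  assumes X: "mvs V E s t X" and w: "walk E w" and wd: "w = xs @ x # ys" and y: "y \<in> set ys"
    and xX: "x \<in> X" and yX: "y \<in> X"
  shows "critical_node V E s t y"
proof -
  obtain ys1 ys2 where ysd: "ys = ys1 @ y # ys2" using split_list[OF y] by blast
  have "walk_from_to E (hd w) (last w) (xs @ x # ys1 @ y # ys2)" using w wd ysd
    unfolding walk_from_to_def by simp
  then have "walk_from_to E x y (x # ys1 @ [y])" by (rule wft_sub)
  moreover have "length (x # ys1 @ [y]) \<ge> 2" by simp
  ultimately show ?thesis unfolding critical_node_def using X xX yX by blast
qed

lemma wft_walk: "walk_from_to E a b w \<Longrightarrow> walk E w"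
  by (simp add: walk_from_to_def)

lemma s_not_in:
  assumes G: "st_graph V E s t" and w: "walk_from_to E x b w" and xs: "x \<noteq> s"
  shows "s \<notin> set w"
proof
  assume "s \<in> set w"
  then obtain w1 w2 where wd: "w = w1 @ s # w2" by (meson split_list)
  have "hd w = x" using w by (simp add: walk_from_to_def)
  then have "w1 \<noteq> []" using wd xs by auto
  have "walk E (w1 @ [s])" using walk_split(1) wft_walk[OF w] wd by metis
  then have "(last w1, s) \<in> E" using walk_append_iff[of w1 "[s]" E] \<open>w1 \<noteq> []\<close> by simp
  then show False using G by (simp add: st_graph_def)
qed

lemma cover:
  assumes G: "st_graph V E s t" and C: "complete_chain V E s t T n"
    and NC: "\<forall>i\<le>n. \<forall>b\<in>T i. \<not> critical_node V E s t b"
    and M: "mvs V E s t M" and bM: "b \<in> M"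
  shows "\<exists>i\<le>n. b \<in> T i"
proof (rule ccontr)
  assume "\<not> (\<exists>i\<le>n. b \<in> T i)"
  then have nb: "\<And>i. i \<le> n \<Longrightarrow> b \<notin> T i" by blast
  have Tm: "\<And>i. i \<le> n \<Longrightarrow> mvs V E s t (T i)" and T0: "T 0 = {s}" and Tn: "T n = {t}"
    and sb: "\<And>i. i < n \<Longrightarrow> set_below E t (T i) (T (Suc i))"
    and compl: "\<And>T' i. i < n \<Longrightarrow> mvs V E s t T' \<Longrightarrow> set_below E t (T i) T' \<Longrightarrow> set_below E t T' (T (Suc i))
        \<Longrightarrow> T' = T i \<or> T' = T (Suc i)"
    using C unfolding complete_chain_def set_strict_below_def by blast+
  have bs: "b \<noteq> s" using nb[of 0] T0 by auto
  have bV: "b \<in> V" using M bM by (auto simp: mvs_def vertex_separator_def)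
  obtain p where p: "walk_from_to E s t p" "b \<in> set p" using G bV by (auto simp: st_graph_def)
  obtain p1 p2 where pd: "p = p1 @ b # p2" using split_list[OF p(2)] by blast
  have bw: "walk_from_to E b t (b # p2)" using wft_split(2) p(1) pd by metis
  have "set (b # p2) \<inter> T 0 = {}" using s_not_in[OF G bw bs] T0 by auto
  then have nb0: "\<not> below E t b (T 0)" using bw unfolding below_def by blast
  have bn: "below E t b (T n)" using Tn unfolding below_def walk_from_to_def walk_def
    by (metis disjoint_insert(1) last_in_set)
  define k where "k = (LEAST k. below E t b (T k))"
  have bk: "below E t b (T k)" using bn unfolding k_def by (rule LeastI)
  have kn: "k \<le> n" using bn unfolding k_def by (rule Least_le)
  have k0: "k \<noteq> 0" using bk nb0 by (metis)
  define j where "j = k - 1"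
  have kj: "k = Suc j" using k0 j_def by simp
  have jn: "j < n" using kn kj by simp
  have nbj: "\<not> below E t b (T j)" using not_less_Least[of j "\<lambda>k. below E t b (T k)"] kj k_def by simp
  have bY: "below E t b (T (Suc j))" using bk kj by simp
  define X where "X = T j"
  define Y where "Y = T (Suc j)"
  have Xm: "mvs V E s t X" using Tm jn X_def by simp
  have Ym: "mvs V E s t Y" using Tm jn Y_def by simp
  define P where "P = Fm E s M Y"
  define N where "N = Lm E t X P"
  have Pm: "mvs V E s t P" using Fm_mvs[OF M Ym] P_def by simp
  have Nm: "mvs V E s t N" using Lm_mvs[OF Xm Pm] N_def by simp
  have XN: "set_below E t (T j) N" using Lm_above X_def N_def by metis
  have PY: "set_below E t P Y" using Fm_below[OF mvs_sep[OF Ym]] P_def by simp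
  have XY: "set_below E t X Y" using sb[OF jn] X_def Y_def by simp
  have NY: "set_below E t N (T (Suc j))" using PY XY Y_def unfolding N_def Lm_def set_below_def by auto
  have nbX: "b \<notin> X" and nbY: "b \<notin> Y" using nb jn X_def Y_def by auto
  have NCX: "\<And>x. x \<in> X \<Longrightarrow> \<not> critical_node V E s t x" using NC jn X_def less_imp_le by blast
  have NCY: "\<And>x. x \<in> Y \<Longrightarrow> \<not> critical_node V E s t x" using NC jn Y_def Suc_leI by blast
  obtain q where q: "walk_from_to E s t q" "\<forall>x\<in>set q. x \<in> M \<longrightarrow> x = b" "b \<in> set q"
    using mvs_private[OF M bM] by blast
  have qw: "walk E q" using q(1) by (rule wft_walk)
  have bP: "b \<in> P"
  proof -
    obtain q1 q2 where qd: "q = q1 @ b # q2" "b \<notin> set q1" using split_list_first[OF q(3)] by blast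
    have w1: "walk_from_to E s b (q1 @ [b])" using wft_split(1) q(1) qd(1) by metis
    have w2: "walk_from_to E b t (b # q2)" using wft_split(2) q(1) qd(1) by metis
    have "\<forall>x\<in>set q1. x \<notin> M \<union> Y"
    proof
      fix x assume x: "x \<in> set q1"
      have "x \<notin> M" using q(2) qd x by auto
      moreover have "x \<notin> Y"
      proof
        assume xY: "x \<in> Y"
        obtain y' where y': "y' \<in> set (b # q2)" "y' \<in> Y" using bY w2 Y_def unfolding below_def by blast
        have "y' \<in> set q2" using y' nbY by auto
        obtain xa xb where q1d: "q1 = xa @ x # xb" using split_list[OF x] by blast
        have "critical_node V E s t y'"
          using crit_of_walk[OF Ym qw, of xa x "xb @ b # q2" y'] qd q1d \<open>y' \<in> set q2\<close> xY y' by simp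
        then show False using NCY y' by blast
      qed
      ultimately show "x \<notin> M \<union> Y" by blast
    qed
    then show ?thesis using w1 bM unfolding P_def Fm_def by fastforce
  qed
  have bN: "b \<in> N"
  proof -
    obtain q1 q2 where qd: "q = q1 @ b # q2" "b \<notin> set q2" using split_list_last[OF q(3)] by blast
    have w1: "walk_from_to E s b (q1 @ [b])" using wft_split(1) q(1) qd(1) by metis
    have w2: "walk_from_to E b t (b # q2)" using wft_split(2) q(1) qd(1) by metis
    have "\<forall>x\<in>set q2. x \<notin> X \<union> P"
    proof
      fix x assume x: "x \<in> set q2"
      have xM: "x \<notin> M" using q(2) qd x by auto
      have "x \<notin> X"
      proof
        assume xX: "x \<in> X"
        obtain r where r: "walk_from_to E b t r" "set r \<inter> X = {}" using nbj X_def unfolding below_def by blast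
        have "walk_from_to E s t (butlast (q1 @ [b]) @ r)" using wft_glue2[OF w1 r(1)] .
        then have "\<exists>x0\<in>set (q1 @ r). x0 \<in> X" using sep_hits[OF mvs_sep[OF Xm]] by (metis butlast_snoc)
        then obtain x0 where x0: "x0 \<in> set (q1 @ r)" "x0 \<in> X" by blast
        then have "x0 \<in> set q1" using r(2) by auto
        then obtain xa xb where q1d: "q1 = xa @ x0 # xb" using split_list by metis
        have "critical_node V E s t x"
          using crit_of_walk[OF Xm qw, of xa x0 "xb @ b # q2" x] qd q1d x xX x0 by simp
        then show False using NCX xX by blast
      qed
      moreover have "x \<notin> P"
      proof
        assume xP: "x \<in> P"
        have "critical_node V E s t x"
          using crit_of_walk[OF Pm qw, of q1 b q2 x] qd x xP bP by simp
        moreover have "x \<in> Y" using xP xM unfolding P_def Fm_def by blast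
        ultimately show False using NCY by blast
      qed
      ultimately show "x \<notin> X \<union> P" by blast
    qed
    then show ?thesis using w2 bP unfolding N_def Lm_def by fastforce
  qed
  have "N = T j \<or> N = T (Suc j)" using compl[OF jn Nm XN NY] .
  then show False using bN nbX nbY X_def Y_def by auto
qed

lemma sum_count_filter:
  assumes "finite M"
  shows "(\<Sum>v\<in>M. count_list p v) = length (filter (\<lambda>x. x \<in> M) p)"
proof (induction p)
  case Nil then show ?case by simp
next
  case (Cons x p)
  have "(\<Sum>v\<in>M. count_list (x # p) v) = (\<Sum>v\<in>M. count_list p v + (if x = v then 1 else 0))"
    by (rule sum.cong) auto
  also have "\<dots> = (\<Sum>v\<in>M. count_list p v) + (\<Sum>v\<in>M. (if x = v then 1 else 0))"
    by (simp add: sum.distrib)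
  also have "(\<Sum>v\<in>M. (if x = v then 1 else 0)) = (if x \<in> M then 1 else (0::nat))"
    using sum.delta'[OF assms, of x "\<lambda>_. 1::nat"] by simp
  finally show ?case using Cons by simp
qed

lemma no_crit_thin:
  assumes NC: "\<forall>b. \<not> critical_node V E s t b" and M: "mvs V E s t M"
    and p: "walk_from_to E s t p"
  shows "length (filter (\<lambda>x. x \<in> M) p) = 1"
proof -
  have ex: "\<exists>x\<in>set p. x \<in> M" using sep_hits[OF mvs_sep[OF M] p] .
  then obtain xs x ys where d: "p = xs @ x # ys" "x \<in> M" "\<forall>y\<in>set xs. y \<notin> M"
    using split_list_first_prop[of p "\<lambda>x. x \<in> M"] by blast
  have "\<forall>y\<in>set ys. y \<notin> M"
  proof (intro ballI notI)
    fix y assume "y \<in> set ys" "y \<in> M"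
    then have "critical_node V E s t y" using crit_of_walk[OF M wft_walk[OF p] d(1)] d(2) by blast
    then show False using NC by blast
  qed
  then have "filter (\<lambda>x. x \<in> M) ys = []" by (simp add: filter_empty_conv)
  moreover have "filter (\<lambda>x. x \<in> M) xs = []" using d(3) by (simp add: filter_empty_conv)
  ultimately show ?thesis using d by simp
qed

lemma cons_over:
  assumes "finite A" "flow_support \<phi> \<subseteq> A"
  shows "consumption \<phi> v = (\<Sum>p\<in>A. count_list p v * \<phi> p)"
  unfolding consumption_def
  by (rule sum.mono_neutral_left[OF assms(1) assms(2)]) (auto simp: flow_support_def)

lemma val_over:
  assumes "finite A" "flow_support \<phi> \<subseteq> A"
  shows "flow_value \<phi> = (\<Sum>p\<in>A. \<phi> p)"
  unfolding flow_value_def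
  by (rule sum.mono_neutral_left[OF assms(1) assms(2)]) (auto simp: flow_support_def)

lemma finite_V: "st_graph V E s t \<Longrightarrow> finite V"
  by (simp add: st_graph_def)

lemma mvs_finite: "st_graph V E s t \<Longrightarrow> mvs V E s t M \<Longrightarrow> finite M"
  using finite_subset finite_V unfolding mvs_def vertex_separator_def by metis

lemma value_eq_M:
  assumes G: "st_graph V E s t" and NC: "\<forall>b. \<not> critical_node V E s t b" and M: "mvs V E s t M"
    and \<psi>: "is_flow E s t \<eta> \<psi>"
  shows "flow_value \<psi> = (\<Sum>v\<in>M. consumption \<psi> v)"
proof -
  let ?S = "flow_support \<psi>"
  have fM: "finite M" using mvs_finite[OF G M] .
  have "(\<Sum>v\<in>M. consumption \<psi> v) = (\<Sum>v\<in>M. \<Sum>p\<in>?S. count_list p v * \<psi> p)"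
    unfolding consumption_def ..
  also have "\<dots> = (\<Sum>p\<in>?S. \<Sum>v\<in>M. count_list p v * \<psi> p)" by (rule sum.swap)
  also have "\<dots> = (\<Sum>p\<in>?S. (\<Sum>v\<in>M. count_list p v) * \<psi> p)" by (simp add: sum_distrib_right)
  also have "\<dots> = (\<Sum>p\<in>?S. \<psi> p)"
  proof (rule sum.cong[OF refl])
    fix p assume "p \<in> ?S"
    then have "walk_from_to E s t p" using \<psi> unfolding is_flow_def by blast
    then show "(\<Sum>v\<in>M. count_list p v) * \<psi> p = \<psi> p"
      using no_crit_thin[OF NC M] sum_count_filter[OF fM] by simp
  qed
  finally show ?thesis unfolding flow_value_def by simp
qed

lemma sep_contains_mvs:
  assumes fV: "finite V" and S: "vertex_separator V E s t S"
  shows "\<exists>M\<subseteq>S. mvs V E s t M"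
  using S
proof (induction "card S" arbitrary: S rule: less_induct)
  case less
  show ?case
  proof (cases "mvs V E s t S")
    case True then show ?thesis by blast
  next
    case False
    then obtain S' where S': "S' \<subset> S" "vertex_separator V E s t S'" using less.prems unfolding mvs_def by blast
    have "finite S" using less.prems fV finite_subset unfolding vertex_separator_def by metis
    then have "card S' < card S" using S'(1) psubset_card_mono by blast
    then obtain M where "M \<subseteq> S'" "mvs V E s t M" using less.hyps S'(2) by blast
    then show ?thesis using S'(1) by blast
  qed
qed

lemma count_distinct: "distinct xs \<Longrightarrow> count_list xs v = (if v \<in> set xs then 1 else 0)"
  by (induction xs) auto

lemma enat_ne0: "(x::enat) \<noteq> 0 \<Longrightarrow> enat 1 \<le> x"
  by (cases x) (auto simp: one_enat_def zero_enat_def)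

lemma Z_sep:
  assumes G: "st_graph V E s t" and inh: "inhibits E s t \<phi> \<eta>"
  shows "vertex_separator V E s t {v\<in>V. residual \<eta> \<phi> v = 0}"
  unfolding vertex_separator_def
proof (intro conjI allI impI)
  show "{v\<in>V. residual \<eta> \<phi> v = 0} \<subseteq> V" by blast
next
  fix p assume p: "walk_from_to E s t p"
  show "set p \<inter> {v\<in>V. residual \<eta> \<phi> v = 0} \<noteq> {}"
  proof
    assume empty: "set p \<inter> {v\<in>V. residual \<eta> \<phi> v = 0} = {}"
    obtain p' where p': "walk_from_to E s t p'" "distinct p'" "set p' \<subseteq> set p"
      using walk_distinct[OF p] by blast
    have pV: "set p \<subseteq> V" using walk_in_V[OF G p] .
    define \<psi> where "\<psi> = (\<lambda>q. if q = p' then (1::nat) else 0)"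
    have supp: "flow_support \<psi> = {p'}" unfolding \<psi>_def flow_support_def by auto
    have cons: "consumption \<psi> v = count_list p' v" for v
      unfolding consumption_def supp by (simp add: \<psi>_def)
    have "is_flow E s t (residual \<eta> \<phi>) \<psi>"
      unfolding is_flow_def
    proof (intro conjI ballI allI)
      show "finite (flow_support \<psi>)" using supp by simp
    next
      fix q assume "q \<in> flow_support \<psi>" then show "walk_from_to E s t q" using supp p' by simp
    next
      fix v
      show "enat (consumption \<psi> v) \<le> residual \<eta> \<phi> v"
      proof (cases "v \<in> set p'")
        case True
        then have "residual \<eta> \<phi> v \<noteq> 0" using empty p'(3) pV by blast
        then show ?thesis using cons count_distinct[OF p'(2)] True enat_ne0 by simp
      next
        case False
        then show ?thesis using cons by (simp add: zero_enat_def[symmetric])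
      qed
    qed
    moreover have "flow_value \<psi> = 1" unfolding flow_value_def supp by (simp add: \<psi>_def)
    ultimately show False using inh unfolding inhibits_def by force
  qed
qed

lemma inhibit_bound:
  assumes G: "st_graph V E s t" and NC: "\<forall>b. \<not> critical_node V E s t b"
    and inh: "inhibits E s t \<phi> \<eta>" and \<psi>: "is_flow E s t \<eta> \<psi>"
  shows "flow_value \<psi> \<le> flow_value \<phi>"
proof -
  have \<phi>: "is_flow E s t \<eta> \<phi>" using inh by (simp add: inhibits_def)
  obtain M where MZ: "M \<subseteq> {v\<in>V. residual \<eta> \<phi> v = 0}" and M: "mvs V E s t M"
    using sep_contains_mvs[OF finite_V[OF G] Z_sep[OF G inh]] by blast
  have le: "consumption \<psi> v \<le> consumption \<phi> v" if "v \<in> M" for v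
  proof -
    have r0: "\<eta> v - enat (consumption \<phi> v) = 0" using MZ that unfolding residual_def by blast
    have c\<psi>: "enat (consumption \<psi> v) \<le> \<eta> v" using \<psi> unfolding is_flow_def by blast
    show ?thesis
    proof (cases "\<eta> v")
      case (enat k)
      then have "k \<le> consumption \<phi> v" using r0 by (simp add: zero_enat_def)
      then show ?thesis using c\<psi> enat by simp
    next
      case infinity
      then show ?thesis using r0 by simp
    qed
  qed
  have "flow_value \<psi> = (\<Sum>v\<in>M. consumption \<psi> v)" using value_eq_M[OF G NC M \<psi>] .
  also have "\<dots> \<le> (\<Sum>v\<in>M. consumption \<phi> v)" using le by (rule sum_mono)
  also have "\<dots> = flow_value \<phi>" using value_eq_M[OF G NC M \<phi>] by simp
  finally show ?thesis .
qed

lemma add_flow: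
  assumes \<phi>: "is_flow E s t \<eta> \<phi>" and \<psi>: "is_flow E s t (residual \<eta> \<phi>) \<psi>"
  shows "is_flow E s t \<eta> (\<lambda>p. \<phi> p + \<psi> p)"
    "flow_value (\<lambda>p. \<phi> p + \<psi> p) = flow_value \<phi> + flow_value \<psi>"
proof -
  let ?U = "flow_support \<phi> \<union> flow_support \<psi>"
  have supp: "flow_support (\<lambda>p. \<phi> p + \<psi> p) = ?U" unfolding flow_support_def by auto
  have fU: "finite ?U" using \<phi> \<psi> unfolding is_flow_def by blast
  have cons: "consumption (\<lambda>p. \<phi> p + \<psi> p) v = consumption \<phi> v + consumption \<psi> v" for v
  proof -
    have "consumption (\<lambda>p. \<phi> p + \<psi> p) v = (\<Sum>p\<in>?U. count_list p v * \<phi> p + count_list p v * \<psi> p)"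
      unfolding consumption_def supp by (simp add: distrib_left)
    also have "\<dots> = (\<Sum>p\<in>?U. count_list p v * \<phi> p) + (\<Sum>p\<in>?U. count_list p v * \<psi> p)"
      by (rule sum.distrib)
    also have "\<dots> = consumption \<phi> v + consumption \<psi> v"
      using cons_over[OF fU, of \<phi> v] cons_over[OF fU, of \<psi> v] by auto
    finally show ?thesis .
  qed
  show "is_flow E s t \<eta> (\<lambda>p. \<phi> p + \<psi> p)"
    unfolding is_flow_def
  proof (intro conjI ballI allI)
    show "finite (flow_support (\<lambda>p. \<phi> p + \<psi> p))" using supp fU by simp
  next
    fix p assume "p \<in> flow_support (\<lambda>p. \<phi> p + \<psi> p)"
    then show "walk_from_to E s t p" using supp \<phi> \<psi> unfolding is_flow_def by blast
  next
    fix v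
    have a: "enat (consumption \<phi> v) \<le> \<eta> v" using \<phi> unfolding is_flow_def by blast
    have b: "enat (consumption \<psi> v) \<le> \<eta> v - enat (consumption \<phi> v)"
      using \<psi> unfolding is_flow_def residual_def by blast
    show "enat (consumption (\<lambda>p. \<phi> p + \<psi> p) v) \<le> \<eta> v"
    proof (cases "\<eta> v")
      case (enat k)
      then show ?thesis using a b cons by simp
    next
      case infinity
      then show ?thesis by simp
    qed
  qed
  have "flow_value (\<lambda>p. \<phi> p + \<psi> p) = (\<Sum>p\<in>?U. \<phi> p + \<psi> p)"
    unfolding flow_value_def supp ..
  also have "\<dots> = (\<Sum>p\<in>?U. \<phi> p) + (\<Sum>p\<in>?U. \<psi> p)" by (rule sum.distrib)
  also have "\<dots> = flow_value \<phi> + flow_value \<psi>"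
    using val_over[OF fU, of \<phi>] val_over[OF fU, of \<psi>] by auto
  finally show "flow_value (\<lambda>p. \<phi> p + \<psi> p) = flow_value \<phi> + flow_value \<psi>" .
qed

lemma minmax:
  assumes G: "st_graph V E s t" and NC: "\<forall>b. \<not> critical_node V E s t b"
  shows "min_inhibit E s t \<eta> = max_flow E s t \<eta>"
proof -
  define S where "S = {enat (flow_value \<phi>) | \<phi>. is_flow E s t \<eta> \<phi>}"
  define I where "I = {enat (flow_value \<phi>) | \<phi>. inhibits E s t \<phi> \<eta>}"
  have IS: "I \<subseteq> S" unfolding I_def S_def inhibits_def by blast
  have le: "\<And>x y. x \<in> S \<Longrightarrow> y \<in> I \<Longrightarrow> x \<le> y"
    unfolding S_def I_def using inhibit_bound[OF G NC] by fastforce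
  show ?thesis
  proof (cases "I = {}")
    case False
    then obtain y where y: "y \<in> I" by blast
    have "Sup S \<le> Inf I" by (intro Sup_least Inf_greatest le)
    moreover have "Inf I \<le> Sup S"
      using y IS by (meson Inf_lower Sup_upper order.trans subsetD)
    ultimately show ?thesis unfolding min_inhibit_def max_flow_def S_def[symmetric] I_def[symmetric]
      by simp
  next
    case True
    have "Sup S = \<infinity>"
    proof (rule ccontr)
      assume "Sup S \<noteq> \<infinity>"
      then obtain B where B: "Sup S = enat B" by (cases "Sup S") auto
      have bnd: "flow_value \<phi> \<le> B" if "is_flow E s t \<eta> \<phi>" for \<phi>
      proof -
        have "enat (flow_value \<phi>) \<in> S" using that unfolding S_def by blast
        then have "enat (flow_value \<phi>) \<le> enat B" using B Sup_upper by metis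
        then show ?thesis by simp
      qed
      define Vals where "Vals = {flow_value \<phi> | \<phi>. is_flow E s t \<eta> \<phi>}"
      have "Vals \<subseteq> {..B}" unfolding Vals_def using bnd by auto
      then have fin: "finite Vals" using finite_subset by blast
      have zero: "is_flow E s t \<eta> (\<lambda>_. 0)"
        unfolding is_flow_def flow_support_def consumption_def by (simp add: zero_enat_def[symmetric])
      then have "Vals \<noteq> {}" unfolding Vals_def by blast
      then have "Max Vals \<in> Vals" using fin Max_in by blast
      moreover obtain m where m: "m = Max Vals" by blast
      ultimately have "m \<in> Vals" by simp
      then obtain \<phi> where \<phi>0: "is_flow E s t \<eta> \<phi>" "flow_value \<phi> = m"
        unfolding Vals_def by blast
      have \<phi>: "is_flow E s t \<eta> \<phi>" "flow_value \<phi> = Max Vals" using \<phi>0 m by auto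
      have "\<not> inhibits E s t \<phi> \<eta>" using True unfolding I_def by blast
      then obtain \<psi> where \<psi>: "is_flow E s t (residual \<eta> \<phi>) \<psi>" "flow_value \<psi> > 0"
        using \<phi>(1) unfolding inhibits_def by blast
      have "flow_value (\<lambda>p. \<phi> p + \<psi> p) \<in> Vals"
        using add_flow(1)[OF \<phi>(1) \<psi>(1)] unfolding Vals_def by blast
      then have "flow_value (\<lambda>p. \<phi> p + \<psi> p) \<le> Max Vals" using fin Max_ge by blast
      then show False using add_flow(2)[OF \<phi>(1) \<psi>(1)] \<phi>(2) \<psi>(2) by simp
    qed
    moreover have "Inf I = \<infinity>" using True by (simp add: top_enat_def)
    ultimately show ?thesis unfolding min_inhibit_def max_flow_def S_def[symmetric] I_def[symmetric]
      by simp
  qed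
qed

theorem theorem2:
  fixes V :: "'v set" and E :: "('v \<times> 'v) set" and s t :: 'v
    and T :: "nat \<Rightarrow> 'v set" and n :: nat
  assumes "st_graph V E s t"
    and "weak V E s t"
    and "complete_chain V E s t T n"
  shows "\<exists>i\<le>n. \<exists>b\<in>T i. critical_node V E s t b"
proof (rule ccontr)
  assume H: "\<not> (\<exists>i\<le>n. \<exists>b\<in>T i. critical_node V E s t b)"
  have NC: "\<forall>b. \<not> critical_node V E s t b"
  proof (intro allI notI)
    fix b assume cb: "critical_node V E s t b"
    then obtain M where "mvs V E s t M" "b \<in> M" unfolding critical_node_def by blast
    then obtain i where "i \<le> n" "b \<in> T i" using cover[OF assms(1) assms(3)] H by blast
    then show False using H cb by blast
  qed
  obtain \<eta> where "min_inhibit E s t \<eta> \<noteq> max_flow E s t \<eta>" using assms(2) unfolding weak_def by blast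
  then show False using minmax[OF assms(1) NC] by simp
qed

end
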